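(* Let $\mathbb{U},B\in\mathbb{R}^{n\times n}$ and consider the bilinear system $z_{t+1}=\mathbb{U}z_t+u_tBz_t$, $z_t\in\mathbb{R}^n$, $u_t\in\mathbb{R}$. Let $Q=Q^\top\succ0$ in $\mathbb{R}^{n\times n}$ and $y\in\mathbb{R}^n$ be such that, for some real number $\varepsilon\neq0$, the matrix inequality \[ \begin{pmatrix} -Q & 0 & y & Q\mathbb{U}^\top\\ 0 & -\varepsilon Q & 0 & QB^\top\\ y^\top & 0 & -\frac{1}{\varepsilon} & 0\\ \mathbb{U}Q & BQ & 0 & -Q \end{pmatrix}\prec 0 \] holds. Then the linear state feedback $u_t=k^\top z_t$ with gain $k=Q^{-1}y$ stabilizes the bilinear system inside the ellipsoid $\mathscr{E}=\{z\in\mathbb{R}^n: z^\top Q^{-1}z\le1\}$, and the quadratic form $V(z)=z^\top Q^{-1}z$ is a control Lyapunov function for the bilinear system.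
   Context: $\prec0$ denotes negative definiteness of a symmetric matrix. A discrete-time control Lyapunov function is a radially unbounded positive definite function $V$ with $V(0)=0$, $V(z)>0$ for $z\ne0$, such that for every state $z_t$ there exists an input $u_t$ with $V(z_{t+1})-V(z_t)<0$. "Stabilizes inside $\mathscr{E}$" means that along the closed-loop system $z_{t+1}=\mathbb{U}z_t+(k^\top z_t)Bz_t$ the quantity $V$ strictly decreases for nonzero states in $\mathscr{E}$. *)

theory Defs
  imports "HOL-Analysis.Analysis"
begin

definition pos_def_mat :: "real^'m^'m \<Rightarrow> bool" where
  "pos_def_mat M \<longleftrightarrow> transpose M = M \<and> (\<forall>x. x \<noteq> 0 \<longrightarrow> x \<bullet> (M *v x) > 0)"

definition neg_def_mat :: "real^'m^'m \<Rightarrow> bool" where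
  "neg_def_mat M \<longleftrightarrow> transpose M = M \<and> (\<forall>x. x \<noteq> 0 \<longrightarrow> x \<bullet> (M *v x) < 0)"

text \<open>The (3n+1)x(3n+1) block matrix of the LMI. Block index set:
  Inl i (first block), Inr (Inl i) (second), Inr (Inr (Inl ())) (scalar), Inr (Inr (Inr i)) (fourth).\<close>
definition lmi_matrix ::
  "real^'n^'n \<Rightarrow> real^'n^'n \<Rightarrow> real^'n^'n \<Rightarrow> real^'n \<Rightarrow> real
    \<Rightarrow> real^('n + 'n + unit + 'n)^('n + 'n + unit + 'n)" where
  "lmi_matrix U B Q y \<epsilon> = (\<chi> r s. case (r, s) of
      (Inl i, Inl j) \<Rightarrow> - (Q$i$j)
    | (Inl i, Inr (Inl j)) \<Rightarrow> 0
    | (Inl i, Inr (Inr (Inl _))) \<Rightarrow> y$i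
    | (Inl i, Inr (Inr (Inr j))) \<Rightarrow> (Q ** transpose U)$i$j
    | (Inr (Inl i), Inl j) \<Rightarrow> 0
    | (Inr (Inl i), Inr (Inl j)) \<Rightarrow> - \<epsilon> * Q$i$j
    | (Inr (Inl i), Inr (Inr (Inl _))) \<Rightarrow> 0
    | (Inr (Inl i), Inr (Inr (Inr j))) \<Rightarrow> (Q ** transpose B)$i$j
    | (Inr (Inr (Inl _)), Inl j) \<Rightarrow> y$j
    | (Inr (Inr (Inl _)), Inr (Inl j)) \<Rightarrow> 0
    | (Inr (Inr (Inl _)), Inr (Inr (Inl _))) \<Rightarrow> - 1 / \<epsilon>
    | (Inr (Inr (Inl _)), Inr (Inr (Inr j))) \<Rightarrow> 0
    | (Inr (Inr (Inr i)), Inl j) \<Rightarrow> (U ** Q)$i$j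
    | (Inr (Inr (Inr i)), Inr (Inl j)) \<Rightarrow> (B ** Q)$i$j
    | (Inr (Inr (Inr i)), Inr (Inr (Inl _))) \<Rightarrow> 0
    | (Inr (Inr (Inr i)), Inr (Inr (Inr j))) \<Rightarrow> - (Q$i$j))"

definition bilin_step :: "real^'n^'n \<Rightarrow> real^'n^'n \<Rightarrow> real^'n \<Rightarrow> real \<Rightarrow> real^'n" where
  "bilin_step U B z u = U *v z + u *\<^sub>R (B *v z)"

definition is_clf :: "real^'n^'n \<Rightarrow> real^'n^'n \<Rightarrow> (real^'n \<Rightarrow> real) \<Rightarrow> bool" where
  "is_clf U B V \<longleftrightarrow> V 0 = 0 \<and> (\<forall>z. z \<noteq> 0 \<longrightarrow> V z > 0)
     \<and> filterlim V at_top at_infinity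
     \<and> (\<forall>z. z \<noteq> 0 \<longrightarrow> (\<exists>u. V (bilin_step U B z u) - V z < 0))"

definition stabilizes_inside ::
  "real^'n^'n \<Rightarrow> real^'n^'n \<Rightarrow> real^'n \<Rightarrow> (real^'n \<Rightarrow> real) \<Rightarrow> (real^'n) set \<Rightarrow> bool" where
  "stabilizes_inside U B k V E \<longleftrightarrow>
     (\<forall>z\<in>E. z \<noteq> 0 \<longrightarrow> V (bilin_step U B z (k \<bullet> z)) < V z)"

end

theory Submission
  imports Defs
begin

lemma sum_UNIV_Plus:
  "sum f (UNIV::('a::finite + 'b::finite) set) = sum (\<lambda>i. f (Inl i)) UNIV + sum (\<lambda>i. f (Inr i)) UNIV"
  by (subst UNIV_Plus_UNIV[symmetric], subst sum.Plus) (auto simp: comp_def)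

lemma sum_UNIV_unit: "sum f (UNIV::unit set) = f ()"
  by (simp add: UNIV_unit)

definition blockvec :: "real^'n \<Rightarrow> real^'n \<Rightarrow> real \<Rightarrow> real^'n \<Rightarrow> real^('n + 'n + unit + 'n)" where
  "blockvec a b c d = (\<chi> r. case r of Inl i \<Rightarrow> a$i | Inr (Inl i) \<Rightarrow> b$i
      | Inr (Inr (Inl _)) \<Rightarrow> c | Inr (Inr (Inr i)) \<Rightarrow> d$i)"

lemma cross_sym:
  fixes Q U :: "real^'n^'n"
  assumes "transpose Q = Q"
  shows "a \<bullet> ((Q ** transpose U) *v d) = d \<bullet> ((U ** Q) *v a)"
proof -
  have "a \<bullet> ((Q ** transpose U) *v d) = (a v* (Q ** transpose U)) \<bullet> d"
    by (simp add: dot_lmul_matrix)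
  also have "a v* (Q ** transpose U) = transpose (Q ** transpose U) *v a"
    by simp
  also have "transpose (Q ** transpose U) = U ** Q"
    using assms by (simp add: matrix_transpose_mul)
  finally show ?thesis by (simp add: inner_commute)
qed

lemma expand:
  fixes U B Q :: "real^'n^'n"
  shows "blockvec a b c d \<bullet> (lmi_matrix U B Q y \<epsilon> *v blockvec a b c d) =
     - (a \<bullet> (Q *v a)) - \<epsilon> * (b \<bullet> (Q *v b)) + 2 * c * (y \<bullet> a) - c^2 / \<epsilon>
     + a \<bullet> ((Q ** transpose U) *v d) + d \<bullet> ((U ** Q) *v a)
     + b \<bullet> ((Q ** transpose B) *v d) + d \<bullet> ((B ** Q) *v b) - d \<bullet> (Q *v d)"
  unfolding inner_vec_def matrix_vector_mult_def blockvec_def lmi_matrix_def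
  by (simp add: sum_UNIV_Plus sum_UNIV_unit algebra_simps sum.distrib sum_distrib_left
        sum_subtractf sum_negf power2_eq_square)


lemma inv_facts:
  fixes Q :: "real^'n^'n"
  assumes "pos_def_mat Q"
  shows "Q ** matrix_inv Q = mat 1" "matrix_inv Q ** Q = mat 1"
    "transpose (matrix_inv Q) = matrix_inv Q"
proof -
  have ker: "\<forall>x. Q *v x = 0 \<longrightarrow> x = 0"
  proof (intro allI impI)
    fix x assume "Q *v x = 0"
    then show "x = 0" using assms unfolding pos_def_mat_def by force
  qed
  have inv: "invertible Q"
    using ker by (simp add: invertible_left_inverse matrix_left_invertible_ker)
  then have "\<exists>A'. Q ** A' = mat 1 \<and> A' ** Q = mat 1" by (simp add: invertible_def)
  then have h: "Q ** matrix_inv Q = mat 1 \<and> matrix_inv Q ** Q = mat 1"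
    unfolding matrix_inv_def by (rule someI_ex)
  then show 1: "Q ** matrix_inv Q = mat 1" and 2: "matrix_inv Q ** Q = mat 1" by auto
  have "transpose (matrix_inv Q ** Q) = mat 1" using 2 by simp
  then have "Q ** transpose (matrix_inv Q) = mat 1"
    using assms unfolding pos_def_mat_def by (simp add: matrix_transpose_mul)
  then have "matrix_inv Q ** (Q ** transpose (matrix_inv Q)) = matrix_inv Q"
    by simp
  then show "transpose (matrix_inv Q) = matrix_inv Q"
    using 2 by (simp add: matrix_mul_assoc)
qed

lemma sym_inner:
  fixes P :: "real^'n^'n"
  assumes "transpose P = P"
  shows "x \<bullet> (P *v y) = y \<bullet> (P *v x)"
proof -
  have "x \<bullet> (P *v y) = (x v* P) \<bullet> y" by (simp add: dot_lmul_matrix)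
  also have "x v* P = transpose P *v x" by simp
  finally show ?thesis using assms by (simp add: inner_commute)
qed

theorem theorem4:
  fixes U B Q :: "real^'n^'n" and y :: "real^'n" and \<epsilon> :: real
  assumes "pos_def_mat Q"
    and "\<epsilon> \<noteq> 0"
    and "neg_def_mat (lmi_matrix U B Q y \<epsilon>)"
  shows "stabilizes_inside U B (matrix_inv Q *v y) (\<lambda>z. z \<bullet> (matrix_inv Q *v z))
           {z. z \<bullet> (matrix_inv Q *v z) \<le> 1}
       \<and> is_clf U B (\<lambda>z. z \<bullet> (matrix_inv Q *v z))"
proof -
  define P where "P = matrix_inv Q"
  define V where "V = (\<lambda>z. z \<bullet> (P *v z))"
  have QP: "Q ** P = mat 1" and PQ: "P ** Q = mat 1" and Psym: "transpose P = P"
    using inv_facts[OF assms(1)] unfolding P_def by auto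
  have Qsym: "transpose Q = Q" using assms(1) unfolding pos_def_mat_def by auto
  have QPv: "Q *v (P *v z) = z" for z
    by (simp add: matrix_vector_mul_assoc QP)
  have Pinj: "P *v z = 0 \<Longrightarrow> z = 0" for z
    using QPv[of z] by simp
  have Vpos: "V z > 0" if "z \<noteq> 0" for z
  proof -
    have "P *v z \<noteq> 0" using Pinj that by blast
    then have "(P *v z) \<bullet> (Q *v (P *v z)) > 0"
      using assms(1) unfolding pos_def_mat_def by blast
    then show ?thesis unfolding V_def QPv by (simp add: inner_commute)
  qed
  have neg: "blockvec a b c d \<bullet> (lmi_matrix U B Q y \<epsilon> *v blockvec a b c d) < 0"
    if "a \<noteq> 0 \<or> b \<noteq> 0" for a b c d
  proof -
    have "blockvec a b c d \<noteq> 0"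
    proof
      assume "blockvec a b c d = 0"
      then have "\<forall>i. blockvec a b c d $ Inl i = 0" "\<forall>i. blockvec a b c d $ Inr (Inl i) = 0" by simp_all
      then have "a = 0" "b = 0" by (simp_all add: blockvec_def vec_eq_iff)
      then show False using that by simp
    qed
    then show ?thesis using assms(3) unfolding neg_def_mat_def by blast
  qed
  have key: "V (bilin_step U B z u) - V z - \<epsilon> * u^2 * V z + 2 * c * ((P *v y) \<bullet> z) - c^2 / \<epsilon> < 0"
    if "z \<noteq> 0" for z u c
  proof -
    define w where "w = bilin_step U B z u"
    define a where "a = P *v z"
    have a0: "a \<noteq> 0" unfolding a_def using Pinj that by blast
    define d where "d = P *v w"
    note h = neg[OF disjI1[OF a0], of "u *\<^sub>R a" c d]
    have Qa: "Q *v a = z" unfolding a_def by (rule QPv)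
    have e1: "a \<bullet> (Q *v a) = V z" by (simp add: a_def QPv V_def inner_commute)
    have e2: "(u *\<^sub>R a) \<bullet> (Q *v (u *\<^sub>R a)) = u^2 * V z"
      using e1 by (simp add: matrix_vector_mult_scaleR power2_eq_square)
    have e3: "y \<bullet> a = (P *v y) \<bullet> z"
      unfolding a_def using sym_inner[OF Psym, of y z] by (simp add: inner_commute)
    have e4: "d \<bullet> ((U ** Q) *v a) = d \<bullet> (U *v z)"
      by (simp add: matrix_vector_mul_assoc[symmetric] Qa)
    have e5: "d \<bullet> ((B ** Q) *v (u *\<^sub>R a)) = u * (d \<bullet> (B *v z))"
      by (simp add: matrix_vector_mul_assoc[symmetric] Qa matrix_vector_mult_scaleR)
    have e6: "d \<bullet> (Q *v d) = V w"
      unfolding d_def QPv V_def by (simp add: inner_commute)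
    have e7: "d \<bullet> (U *v z) + u * (d \<bullet> (B *v z)) = V w"
    proof -
      have "d \<bullet> (U *v z) + u * (d \<bullet> (B *v z)) = d \<bullet> w"
        unfolding w_def bilin_step_def by (simp add: inner_add_right)
      then show ?thesis unfolding d_def V_def by (simp add: inner_commute)
    qed
    have "blockvec a (u *\<^sub>R a) c d \<bullet> (lmi_matrix U B Q y \<epsilon> *v blockvec a (u *\<^sub>R a) c d)
      = - V z - \<epsilon> * (u^2 * V z) + 2 * c * ((P *v y) \<bullet> z) - c^2 / \<epsilon> + 2 * V w - V w"
      unfolding expand cross_sym[OF Qsym] e1 e2 e3 e4 e5 e6 using e7 by simp
    with h show ?thesis unfolding w_def by simp
  qed
  have epos: "\<epsilon> > 0"
  proof -
    define b :: "real^'n" where "b = vec 1"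
    have b0: "b \<noteq> 0" unfolding b_def by (simp add: vec_eq_iff)
    have "b \<bullet> (Q *v b) > 0" using b0 assms(1) unfolding pos_def_mat_def by blast
    moreover have "blockvec 0 b 0 0 \<bullet> (lmi_matrix U B Q y \<epsilon> *v blockvec 0 b 0 0) < 0"
      using neg b0 by blast
    then have "- \<epsilon> * (b \<bullet> (Q *v b)) < 0" unfolding expand by simp
    ultimately show ?thesis by (smt (verit) mult_nonneg_nonneg)
  qed
  have stab: "V (bilin_step U B z ((P *v y) \<bullet> z)) < V z" if "z \<noteq> 0" "V z \<le> 1" for z
  proof -
    define u where "u = (P *v y) \<bullet> z"
    have "V (bilin_step U B z u) - V z - \<epsilon> * u^2 * V z + 2 * (\<epsilon> * u) * u - (\<epsilon> * u)^2 / \<epsilon> < 0"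
      using key[OF that(1), of u "\<epsilon> * u"] unfolding u_def by simp
    also have "V (bilin_step U B z u) - V z - \<epsilon> * u^2 * V z + 2 * (\<epsilon> * u) * u - (\<epsilon> * u)^2 / \<epsilon>
       = V (bilin_step U B z u) - V z + \<epsilon> * u^2 * (1 - V z)"
      using assms(2) by (simp add: power2_eq_square field_simps)
    finally have "V (bilin_step U B z u) - V z + \<epsilon> * u^2 * (1 - V z) < 0" .
    moreover have "\<epsilon> * u^2 * (1 - V z) \<ge> 0" using epos that(2) by simp
    ultimately show ?thesis unfolding u_def by linarith
  qed
  have dec: "V (bilin_step U B z 0) - V z < 0" if "z \<noteq> 0" for z
    using key[OF that, of 0 0] by simp
  have V0: "V 0 = 0" unfolding V_def by simp
  have Vscale: "V (r *\<^sub>R x) = r^2 * V x" for r x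
    unfolding V_def by (simp add: matrix_vector_mult_scaleR power2_eq_square)
  have contV: "continuous_on S V" for S
    unfolding V_def by (intro continuous_intros)
  obtain x0 where x0: "x0 \<in> sphere (0::real^'n) 1" "\<forall>x\<in>sphere 0 1. V x0 \<le> V x"
    using continuous_attains_inf[OF compact_sphere _ contV, of 0 1] by auto
  define m where "m = V x0"
  have "x0 \<noteq> 0" using x0(1) by auto
  then have mpos: "m > 0" unfolding m_def using Vpos by blast
  have lower: "m * (norm z)^2 \<le> V z" for z
  proof (cases "z = 0")
    case True then show ?thesis using V0 by simp
  next
    case False
    have "(1 / norm z) *\<^sub>R z \<in> sphere 0 1" using False by simp
    then have "m \<le> V ((1 / norm z) *\<^sub>R z)" using x0 unfolding m_def by blast
    also have "\<dots> = V z / (norm z)^2" unfolding Vscale by (simp add: power2_eq_square)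
    finally show ?thesis using False by (simp add: field_simps)
  qed
  have lim1: "filterlim (\<lambda>z::real^'n. m * (norm z)^2) at_top at_infinity"
  proof -
    have "filterlim (\<lambda>z::real^'n. (norm z)^2) at_top at_infinity"
      by (rule filterlim_pow_at_top[OF _ filterlim_norm_at_top]) simp
    then show ?thesis by (rule filterlim_tendsto_pos_mult_at_top[OF tendsto_const mpos])
  qed
  have limV: "filterlim V at_top at_infinity"
    by (rule filterlim_at_top_mono[OF lim1]) (simp add: lower)
  have "stabilizes_inside U B (P *v y) V {z. V z \<le> 1}"
    unfolding stabilizes_inside_def using stab by auto
  moreover have "is_clf U B V"
    unfolding is_clf_def using V0 Vpos limV dec by blast
  ultimately show ?thesis unfolding V_def P_def by simp
qed

end
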